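(* Let $k$ be a positive integer. The triangular grid graph $T_k$ with $k$ levels is cyclically orderable if and only if $k\le 4$.
   Context: For a positive integer $k$, the triangular grid graph $T_k$ with $k$ levels is the graph whose vertices are the pairs $(i,j)$ of integers with $0\le j\le i\le k-1$, and in which $(i,j)$ is adjacent to $(i,j+1)$ (when $j+1\le i$), to $(i+1,j)$ and to $(i+1,j+1)$ (when $i+1\le k-1$); it is the triangular lattice cut into the shape of a large triangle with $k$ vertices on each side. A cyclic base ordering (CBO) of a connected graph $G$ is a cyclic ordering of $E(G)$, i.e. a bijection $\mathcal{O}:E(G)\to\{1,\dots,|E(G)|\}$, such that for every $i\in\{1,\dots,|E(G)|\}$ the edges $\mathcal{O}^{-1}(i),\mathcal{O}^{-1}(i+1),\dots,\mathcal{O}^{-1}(i+|V(G)|-2)$ (indices taken cyclically modulo $|E(G)|$) induce a spanning tree of $G$. $G$ is cyclically orderable if it has a CBO. The one-vertex edgeless graph $T_1$ is regarded as trivially cyclically orderable. *)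

theory Defs
  imports Main
begin

definition tri_vertices :: "nat \<Rightarrow> (nat \<times> nat) set" where
  "tri_vertices k = {(i, j). j \<le> i \<and> i + 1 \<le> k}"

definition tri_edges :: "nat \<Rightarrow> (nat \<times> nat) set set" where
  "tri_edges k =
     {{(i, j), (i, j + 1)} | i j. j + 1 \<le> i \<and> i + 1 \<le> k}
   \<union> {{(i, j), (i + 1, j)} | i j. j \<le> i \<and> i + 2 \<le> k}
   \<union> {{(i, j), (i + 1, j + 1)} | i j. j \<le> i \<and> i + 2 \<le> k}"

definition connected_on :: "'a set \<Rightarrow> 'a set set \<Rightarrow> bool" where
  "connected_on V F \<longleftrightarrow>
     (\<forall>u\<in>V. \<forall>v\<in>V. (u, v) \<in> {(x, y). {x, y} \<in> F}\<^sup>*)"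

text \<open>F is (the edge set of) a spanning tree of the graph (V, E):
  F \<subseteq> E, (V, F) connected, and |F| = |V| - 1 (a connected finite graph with |V|-1 edges is a tree).\<close>
definition spanning_tree :: "'a set \<Rightarrow> 'a set set \<Rightarrow> 'a set set \<Rightarrow> bool" where
  "spanning_tree V E F \<longleftrightarrow> F \<subseteq> E \<and> connected_on V F \<and> card F = card V - 1"

definition cyclic_base_ordering :: "'a set \<Rightarrow> 'a set set \<Rightarrow> ('a set \<Rightarrow> nat) \<Rightarrow> bool" where
  "cyclic_base_ordering V E ord \<longleftrightarrow>
     bij_betw ord E {1..card E} \<and>
     (\<forall>i\<in>{1..card E}.
        spanning_tree V E
          ((\<lambda>t. the_inv_into E ord (((i - 1 + t) mod card E) + 1)) ` {..< card V - 1}))"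

definition cyclically_orderable :: "'a set \<Rightarrow> 'a set set \<Rightarrow> bool" where
  "cyclically_orderable V E \<longleftrightarrow> (\<exists>ord. cyclic_base_ordering V E ord)"

end

theory Submission
  imports Defs "HOL-Number_Theory.Cong"
begin

lemma cbo_from_list:
  assumes dist: "distinct es" and setE: "set es = E" and Lm: "card V - 1 \<le> length es"
  and conn: "\<forall>s<length es. connected_on V (set (map (\<lambda>t. es ! ((s+t) mod length es)) [0..<card V - 1]))"
  shows "cyclically_orderable V E"
proof -
  define m where "m = length es"
  define L where "L = card V - 1"
  have cardE: "card E = m" using dist setE distinct_card m_def by blast
  have bij0: "bij_betw ((!) es) {..<m} E" using bij_betw_nth[OF dist] setE m_def by blast
  define ord where "ord = (\<lambda>e. the_inv_into {..<m} ((!) es) e + 1)"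
  have bij1: "bij_betw (the_inv_into {..<m} ((!) es)) E {..<m}"
    using bij0 bij_betw_the_inv_into by blast
  have bij2: "bij_betw (\<lambda>x. x + 1) {..<m} {1..m}"
    unfolding bij_betw_def inj_on_def
    by (auto simp: image_iff) (metis Suc_le_D Suc_le_mono add.commute atLeastAtMost_iff lessThan_iff less_Suc_eq_le plus_1_eq_Suc)
  have bij: "bij_betw ord E {1..m}"
    unfolding ord_def using bij_betw_trans[OF bij1 bij2] by (simp add: comp_def)
  have ordnth: "ord (es ! x) = x + 1" if "x < m" for x
    unfolding ord_def using the_inv_into_f_eq[of "(!) es" "{..<m}"] bij0 that
    by (simp add: bij_betw_def)
  have inv: "the_inv_into E ord (x + 1) = es ! x" if "x < m" for x
  proof -
    have "es ! x \<in> E" using that setE m_def by auto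
    then show ?thesis using the_inv_into_f_eq[of ord E "es ! x" "x+1"] bij ordnth[OF that]
      by (simp add: bij_betw_def)
  qed
  show ?thesis
    unfolding cyclically_orderable_def cyclic_base_ordering_def
  proof (intro exI conjI ballI)
    show "bij_betw ord E {1..card E}" using bij cardE by simp
  next
    fix i assume i: "i \<in> {1..card E}"
    define s where "s = i - 1"
    have s: "s < m" using i cardE s_def by auto
    have mpos: "m > 0" using s by simp
    have W: "(\<lambda>t. the_inv_into E ord ((i - 1 + t) mod card E + 1)) ` {..<card V - 1}
        = set (map (\<lambda>t. es ! ((s+t) mod m)) [0..<L])"
      using inv mpos cardE s_def L_def by (auto simp: image_iff)
    have sub: "set (map (\<lambda>t. es ! ((s+t) mod m)) [0..<L]) \<subseteq> E"
      using setE mpos m_def by auto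
    have inj: "inj_on (\<lambda>t. es ! ((s+t) mod m)) {0..<L}"
    proof (rule inj_onI)
      fix t t' assume t: "t \<in> {0..<L}" "t' \<in> {0..<L}" and eq: "es ! ((s+t) mod m) = es ! ((s+t') mod m)"
      have "(s+t) mod m = (s+t') mod m" using eq dist mpos m_def nth_eq_iff_index_eq[of es "(s+t) mod m" "(s+t') mod m"] by auto
      hence "[s+t = s+t'] (mod m)" unfolding cong_def .
      hence "[t = t'] (mod m)" using cong_add_lcancel_nat by blast
      hence "t mod m = t' mod m" unfolding cong_def .
      thus "t = t'" using t Lm L_def m_def by auto
    qed
    have card: "card (set (map (\<lambda>t. es ! ((s+t) mod m)) [0..<L])) = L"
      using inj by (simp add: card_image)
    show "spanning_tree V E ((\<lambda>t. the_inv_into E ord ((i - 1 + t) mod card E + 1)) ` {..<card V - 1})"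
      unfolding W spanning_tree_def using sub card conn s L_def m_def by auto
  qed
qed

definition mk :: "'a \<times> 'a \<Rightarrow> 'a set" where "mk p = {fst p, snd p}"

fun reach :: "nat \<Rightarrow> ('a \<times> 'a) list \<Rightarrow> 'a list \<Rightarrow> 'a list" where
  "reach 0 W S = S"
| "reach (Suc n) W S = reach n W (remdups (S @ [snd p. p \<leftarrow> W, fst p \<in> set S] @ [fst p. p \<leftarrow> W, snd p \<in> set S]))"

lemma reach_sound:
  "v \<in> set (reach n W S) \<Longrightarrow> \<exists>u\<in>set S. (u, v) \<in> {(x, y). {x, y} \<in> set (map mk W)}\<^sup>*"
proof (induction n arbitrary: S v)
  case 0 then show ?case by auto
next
  case (Suc n)
  let ?R = "{(x, y). {x, y} \<in> set (map mk W)}"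
  let ?S' = "remdups (S @ [snd p. p \<leftarrow> W, fst p \<in> set S] @ [fst p. p \<leftarrow> W, snd p \<in> set S])"
  from Suc.prems have "v \<in> set (reach n W ?S')" by simp
  then obtain w where w: "w \<in> set ?S'" and wv: "(w, v) \<in> ?R\<^sup>*" using Suc.IH by blast
  have "\<exists>u\<in>set S. (u, w) \<in> ?R\<^sup>*"
  proof -
    have "w \<in> set S \<or> (\<exists>p\<in>set W. fst p \<in> set S \<and> w = snd p) \<or> (\<exists>p\<in>set W. snd p \<in> set S \<and> w = fst p)"
      using w by auto
    then show ?thesis
    proof (elim disjE bexE conjE)
      assume "w \<in> set S" then show ?thesis by blast
    next
      fix p assume "p \<in> set W" "fst p \<in> set S" "w = snd p"
      have "mk p \<in> set (map mk W)" using \<open>p \<in> set W\<close> by simp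
      moreover have "mk p = {fst p, w}" using \<open>w = snd p\<close> by (simp add: mk_def)
      ultimately have "(fst p, w) \<in> ?R" by simp
      then show ?thesis using \<open>fst p \<in> set S\<close> by blast
    next
      fix p assume "p \<in> set W" "snd p \<in> set S" "w = fst p"
      have "mk p \<in> set (map mk W)" using \<open>p \<in> set W\<close> by simp
      moreover have "mk p = {snd p, w}" using \<open>w = fst p\<close> by (simp add: mk_def insert_commute)
      ultimately have "(snd p, w) \<in> ?R" by simp
      then show ?thesis using \<open>snd p \<in> set S\<close> by blast
    qed
  qed
  then show ?case using wv by (meson rtrancl_trans)
qed

lemma connected_from_reach:
  assumes "r \<in> V" "V \<subseteq> set (reach n W [r])"
  shows "connected_on V (set (map mk W))"
proof -
  let ?R = "{(x, y). {x, y} \<in> set (map mk W)}"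
  have sym: "?R\<inverse> = ?R" by (auto simp: insert_commute)
  have fr: "(r, v) \<in> ?R\<^sup>*" if "v \<in> V" for v using reach_sound[of v n W "[r]"] assms that by auto
  have "(u, v) \<in> ?R\<^sup>*" if "u \<in> V" "v \<in> V" for u v
  proof -
    have "(r, u) \<in> ?R\<^sup>*" using fr that by blast
    then have "(u, r) \<in> (?R\<inverse>)\<^sup>*" by (simp add: rtrancl_converse)
    then have "(u, r) \<in> ?R\<^sup>*" using sym by simp
    then show ?thesis using fr[OF that(2)] by (meson rtrancl_trans)
  qed
  then show ?thesis unfolding connected_on_def by blast
qed

definition lexlt :: "nat \<times> nat \<Rightarrow> nat \<times> nat \<Rightarrow> bool" where
  "lexlt a b \<longleftrightarrow> fst a < fst b \<or> (fst a = fst b \<and> snd a < snd b)"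

lemma cbo_from_pairs:
  assumes dist: "distinct ps" and ord: "\<forall>p\<in>set ps. lexlt (fst p) (snd p)"
  and setE: "mk ` set ps = E" and setV: "set vs = V" and dV: "distinct vs"
  and Lm: "length vs - 1 \<le> length ps" and r: "r \<in> V"
  and chk: "list_all (\<lambda>s. set vs \<subseteq> set (reach (length vs) (map (\<lambda>t. ps ! ((s+t) mod length ps)) [0..<length vs - 1]) [r])) [0..<length ps]"
  shows "cyclically_orderable V E"
proof -
  have inj: "inj_on mk (set ps)"
  proof (rule inj_onI)
    fix p q assume "p \<in> set ps" "q \<in> set ps" "mk p = mk q"
    then have a: "lexlt (fst p) (snd p)" "lexlt (fst q) (snd q)"
      and b: "fst p = fst q \<and> snd p = snd q \<or> fst p = snd q \<and> snd p = fst q"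
      using ord unfolding mk_def doubleton_eq_iff by auto
    have "fst p = fst q \<and> snd p = snd q" using a b unfolding lexlt_def by auto
    then show "p = q" by (simp add: prod_eq_iff)
  qed
  have cV: "card V = length vs" using setV dV distinct_card by blast
  show ?thesis
  proof (rule cbo_from_list[of "map mk ps"])
    show "distinct (map mk ps)" using dist inj by (simp add: distinct_map)
    show "set (map mk ps) = E" using setE by simp
    show "card V - 1 \<le> length (map mk ps)" using Lm cV by simp
    show "\<forall>s<length (map mk ps). connected_on V (set (map (\<lambda>t. map mk ps ! ((s + t) mod length (map mk ps))) [0..<card V - 1]))"
    proof (intro allI impI)
      fix s assume s: "s < length (map mk ps)"
      have eq: "map (\<lambda>t. map mk ps ! ((s + t) mod length (map mk ps))) [0..<card V - 1]
          = map mk (map (\<lambda>t. ps ! ((s+t) mod length ps)) [0..<length vs - 1])"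
        using s cV by (simp add: nth_map, intro ballI nth_map, metis gr_implies_not0 mod_less_divisor neq0_conv)
      show "connected_on V (set (map (\<lambda>t. map mk ps ! ((s + t) mod length (map mk ps))) [0..<card V - 1]))"
        unfolding eq
        apply (rule connected_from_reach[OF r, where n="length vs"])
        using chk s setV by (simp add: list_all_iff)
    qed
  qed
qed

definition vlist :: "nat \<Rightarrow> (nat \<times> nat) list" where
  "vlist k = concat (map (\<lambda>i. map (\<lambda>j. (i, j)) [0..<Suc i]) [0..<k])"

definition plist :: "nat \<Rightarrow> ((nat \<times> nat) \<times> (nat \<times> nat)) list" where
  "plist k = concat (map (\<lambda>i. map (\<lambda>j. ((i, j), (i, j+1))) [0..<i]) [0..<k])
     @ concat (map (\<lambda>i. map (\<lambda>j. ((i, j), (i+1, j))) [0..<Suc i]) [0..<k-1])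
     @ concat (map (\<lambda>i. map (\<lambda>j. ((i, j), (i+1, j+1))) [0..<Suc i]) [0..<k-1])"

lemma tri_vertices_vlist: "tri_vertices k = set (vlist k)"
  unfolding tri_vertices_def vlist_def
  apply (auto simp del: upt_Suc)
  subgoal for a b by (rule bexI[of _ a]) auto
  done

lemma plist_sets:
  "set (concat (map (\<lambda>i. map (\<lambda>j. ((i, j), (i, j+1))) [0..<i]) [0..<k])) = {((i, j), (i, j+1)) | i j. j + 1 \<le> i \<and> i + 1 \<le> k}"
  "set (concat (map (\<lambda>i. map (\<lambda>j. ((i, j), (i+1, j))) [0..<Suc i]) [0..<k-1])) = {((i, j), (i+1, j)) | i j. j \<le> i \<and> i + 2 \<le> k}"
  "set (concat (map (\<lambda>i. map (\<lambda>j. ((i, j), (i+1, j+1))) [0..<Suc i]) [0..<k-1])) = {((i, j), (i+1, j+1)) | i j. j \<le> i \<and> i + 2 \<le> k}"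
  by (auto simp del: upt_Suc simp: image_iff intro!: bexI)

lemma img_pairs: "mk ` {(f i j, g i j) | i j. P i j} = {{f i j, g i j} | i j. P i j}"
  unfolding mk_def by (auto simp: image_iff; blast)

lemma tri_edges_plist: "tri_edges k = mk ` set (plist k)"
  unfolding tri_edges_def plist_def set_append image_Un plist_sets img_pairs
  by (simp add: Un_assoc)

lemma reach_numeral: "reach (numeral n) W S = reach (pred_numeral n) W (remdups (S @ [snd p. p \<leftarrow> W, fst p \<in> set S] @ [fst p. p \<leftarrow> W, snd p \<in> set S]))"
  by (simp add: numeral_eq_Suc)

definition ps2 :: "((nat \<times> nat) \<times> (nat \<times> nat)) list" where "ps2 = [((1,0),(1,1)),((0,0),(1,1)),((0,0),(1,0))]"
definition vs2 :: "(nat \<times> nat) list" where "vs2 = [(0,0),(1,0),(1,1)]"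
definition ws2 :: "((nat \<times> nat) \<times> (nat \<times> nat)) list list" where "ws2 = [[((1,0),(1,1)),((0,0),(1,1))],[((0,0),(1,1)),((0,0),(1,0))],[((0,0),(1,0)),((1,0),(1,1))]]"
lemma w2_0: "set vs2 \<subseteq> set (reach 3 [((1,0),(1,1)),((0,0),(1,1))] [(0,0)])" unfolding vs2_def by (simp add: reach_numeral)
lemma w2_1: "set vs2 \<subseteq> set (reach 3 [((0,0),(1,1)),((0,0),(1,0))] [(0,0)])" unfolding vs2_def by (simp add: reach_numeral)
lemma w2_2: "set vs2 \<subseteq> set (reach 3 [((0,0),(1,0)),((1,0),(1,1))] [(0,0)])" unfolding vs2_def by (simp add: reach_numeral)
lemma T2: "cyclically_orderable (tri_vertices 2) (tri_edges 2)"
proof (rule cbo_from_pairs[of ps2 _ "vs2" _ "(0,0)"])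
  show "distinct ps2" unfolding ps2_def by code_simp
  show "\<forall>p\<in>set ps2. lexlt (fst p) (snd p)" unfolding ps2_def lexlt_def by code_simp
  show "mk ` set ps2 = tri_edges 2" unfolding tri_edges_plist
    by (rule arg_cong[where f="image mk"]) (unfold ps2_def, code_simp)
  show "set vs2 = tri_vertices 2" unfolding tri_vertices_vlist vs2_def by code_simp
  show "distinct vs2" unfolding vs2_def by code_simp
  show "length vs2 - 1 \<le> length ps2" unfolding vs2_def ps2_def by code_simp
  show "(0, 0) \<in> tri_vertices 2" by (simp add: tri_vertices_def)
  have eq: "ws2 = map (\<lambda>s. map (\<lambda>t. ps2 ! ((s+t) mod length ps2)) [0..<length vs2 - 1]) [0..<length ps2]"
    unfolding ws2_def vs2_def ps2_def by code_simp
  have len: "length vs2 = 3" unfolding vs2_def by (simp add: reach_numeral)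
  have L: "list_all (\<lambda>w. set vs2 \<subseteq> set (reach 3 w [(0,0)])) ws2"
    unfolding ws2_def list.pred_inject using w2_0 w2_1 w2_2 by (intro conjI TrueI list.pred_inject(1))
  show "list_all (\<lambda>s. set vs2 \<subseteq> set (reach (length vs2) (map (\<lambda>t. ps2 ! ((s+t) mod length ps2)) [0..<length vs2 - 1]) [(0,0)])) [0..<length ps2]"
    using L[unfolded eq] unfolding len list.pred_map comp_def .
qed

definition ps3 :: "((nat \<times> nat) \<times> (nat \<times> nat)) list" where "ps3 = [((2,0),(2,1)),((1,0),(1,1)),((1,1),(2,2)),((0,0),(1,0)),((1,0),(2,0)),((1,0),(2,1)),((2,1),(2,2)),((0,0),(1,1)),((1,1),(2,1))]"
definition vs3 :: "(nat \<times> nat) list" where "vs3 = [(0,0),(1,0),(1,1),(2,0),(2,1),(2,2)]"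
definition ws3 :: "((nat \<times> nat) \<times> (nat \<times> nat)) list list" where "ws3 = [[((2,0),(2,1)),((1,0),(1,1)),((1,1),(2,2)),((0,0),(1,0)),((1,0),(2,0))],[((1,0),(1,1)),((1,1),(2,2)),((0,0),(1,0)),((1,0),(2,0)),((1,0),(2,1))],[((1,1),(2,2)),((0,0),(1,0)),((1,0),(2,0)),((1,0),(2,1)),((2,1),(2,2))],[((0,0),(1,0)),((1,0),(2,0)),((1,0),(2,1)),((2,1),(2,2)),((0,0),(1,1))],[((1,0),(2,0)),((1,0),(2,1)),((2,1),(2,2)),((0,0),(1,1)),((1,1),(2,1))],[((1,0),(2,1)),((2,1),(2,2)),((0,0),(1,1)),((1,1),(2,1)),((2,0),(2,1))],[((2,1),(2,2)),((0,0),(1,1)),((1,1),(2,1)),((2,0),(2,1)),((1,0),(1,1))],[((0,0),(1,1)),((1,1),(2,1)),((2,0),(2,1)),((1,0),(1,1)),((1,1),(2,2))],[((1,1),(2,1)),((2,0),(2,1)),((1,0),(1,1)),((1,1),(2,2)),((0,0),(1,0))]]"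
lemma w3_0: "set vs3 \<subseteq> set (reach 6 [((2,0),(2,1)),((1,0),(1,1)),((1,1),(2,2)),((0,0),(1,0)),((1,0),(2,0))] [(0,0)])" unfolding vs3_def by (simp add: reach_numeral)
lemma w3_1: "set vs3 \<subseteq> set (reach 6 [((1,0),(1,1)),((1,1),(2,2)),((0,0),(1,0)),((1,0),(2,0)),((1,0),(2,1))] [(0,0)])" unfolding vs3_def by (simp add: reach_numeral)
lemma w3_2: "set vs3 \<subseteq> set (reach 6 [((1,1),(2,2)),((0,0),(1,0)),((1,0),(2,0)),((1,0),(2,1)),((2,1),(2,2))] [(0,0)])" unfolding vs3_def by (simp add: reach_numeral)
lemma w3_3: "set vs3 \<subseteq> set (reach 6 [((0,0),(1,0)),((1,0),(2,0)),((1,0),(2,1)),((2,1),(2,2)),((0,0),(1,1))] [(0,0)])" unfolding vs3_def by (simp add: reach_numeral)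
lemma w3_4: "set vs3 \<subseteq> set (reach 6 [((1,0),(2,0)),((1,0),(2,1)),((2,1),(2,2)),((0,0),(1,1)),((1,1),(2,1))] [(0,0)])" unfolding vs3_def by (simp add: reach_numeral)
lemma w3_5: "set vs3 \<subseteq> set (reach 6 [((1,0),(2,1)),((2,1),(2,2)),((0,0),(1,1)),((1,1),(2,1)),((2,0),(2,1))] [(0,0)])" unfolding vs3_def by (simp add: reach_numeral)
lemma w3_6: "set vs3 \<subseteq> set (reach 6 [((2,1),(2,2)),((0,0),(1,1)),((1,1),(2,1)),((2,0),(2,1)),((1,0),(1,1))] [(0,0)])" unfolding vs3_def by (simp add: reach_numeral)
lemma w3_7: "set vs3 \<subseteq> set (reach 6 [((0,0),(1,1)),((1,1),(2,1)),((2,0),(2,1)),((1,0),(1,1)),((1,1),(2,2))] [(0,0)])" unfolding vs3_def by (simp add: reach_numeral)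
lemma w3_8: "set vs3 \<subseteq> set (reach 6 [((1,1),(2,1)),((2,0),(2,1)),((1,0),(1,1)),((1,1),(2,2)),((0,0),(1,0))] [(0,0)])" unfolding vs3_def by (simp add: reach_numeral)
lemma T3: "cyclically_orderable (tri_vertices 3) (tri_edges 3)"
proof (rule cbo_from_pairs[of ps3 _ "vs3" _ "(0,0)"])
  show "distinct ps3" unfolding ps3_def by code_simp
  show "\<forall>p\<in>set ps3. lexlt (fst p) (snd p)" unfolding ps3_def lexlt_def by code_simp
  show "mk ` set ps3 = tri_edges 3" unfolding tri_edges_plist
    by (rule arg_cong[where f="image mk"]) (unfold ps3_def, code_simp)
  show "set vs3 = tri_vertices 3" unfolding tri_vertices_vlist vs3_def by code_simp
  show "distinct vs3" unfolding vs3_def by code_simp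
  show "length vs3 - 1 \<le> length ps3" unfolding vs3_def ps3_def by code_simp
  show "(0, 0) \<in> tri_vertices 3" by (simp add: tri_vertices_def)
  have eq: "ws3 = map (\<lambda>s. map (\<lambda>t. ps3 ! ((s+t) mod length ps3)) [0..<length vs3 - 1]) [0..<length ps3]"
    unfolding ws3_def vs3_def ps3_def by code_simp
  have len: "length vs3 = 6" unfolding vs3_def by (simp add: reach_numeral)
  have L: "list_all (\<lambda>w. set vs3 \<subseteq> set (reach 6 w [(0,0)])) ws3"
    unfolding ws3_def list.pred_inject using w3_0 w3_1 w3_2 w3_3 w3_4 w3_5 w3_6 w3_7 w3_8 by (intro conjI TrueI list.pred_inject(1))
  show "list_all (\<lambda>s. set vs3 \<subseteq> set (reach (length vs3) (map (\<lambda>t. ps3 ! ((s+t) mod length ps3)) [0..<length vs3 - 1]) [(0,0)])) [0..<length ps3]"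
    using L[unfolded eq] unfolding len list.pred_map comp_def .
qed

definition ps4 :: "((nat \<times> nat) \<times> (nat \<times> nat)) list" where "ps4 = [((2,0),(3,0)),((1,0),(2,0)),((0,0),(1,1)),((1,0),(1,1)),((2,0),(3,1)),((3,1),(3,2)),((3,2),(3,3)),((1,1),(2,1)),((2,2),(3,2)),((3,0),(3,1)),((2,0),(2,1)),((0,0),(1,0)),((1,0),(2,1)),((2,1),(3,1)),((2,1),(3,2)),((2,2),(3,3)),((1,1),(2,2)),((2,1),(2,2))]"
definition vs4 :: "(nat \<times> nat) list" where "vs4 = [(0,0),(1,0),(1,1),(2,0),(2,1),(2,2),(3,0),(3,1),(3,2),(3,3)]"
definition ws4 :: "((nat \<times> nat) \<times> (nat \<times> nat)) list list" where "ws4 = [[((2,0),(3,0)),((1,0),(2,0)),((0,0),(1,1)),((1,0),(1,1)),((2,0),(3,1)),((3,1),(3,2)),((3,2),(3,3)),((1,1),(2,1)),((2,2),(3,2))],[((1,0),(2,0)),((0,0),(1,1)),((1,0),(1,1)),((2,0),(3,1)),((3,1),(3,2)),((3,2),(3,3)),((1,1),(2,1)),((2,2),(3,2)),((3,0),(3,1))],[((0,0),(1,1)),((1,0),(1,1)),((2,0),(3,1)),((3,1),(3,2)),((3,2),(3,3)),((1,1),(2,1)),((2,2),(3,2)),((3,0),(3,1)),((2,0),(2,1))],[((1,0),(1,1)),((2,0),(3,1)),((3,1),(3,2)),((3,2),(3,3)),((1,1),(2,1)),((2,2),(3,2)),((3,0),(3,1)),((2,0),(2,1)),((0,0),(1,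0))],[((2,0),(3,1)),((3,1),(3,2)),((3,2),(3,3)),((1,1),(2,1)),((2,2),(3,2)),((3,0),(3,1)),((2,0),(2,1)),((0,0),(1,0)),((1,0),(2,1))],[((3,1),(3,2)),((3,2),(3,3)),((1,1),(2,1)),((2,2),(3,2)),((3,0),(3,1)),((2,0),(2,1)),((0,0),(1,0)),((1,0),(2,1)),((2,1),(3,1))],[((3,2),(3,3)),((1,1),(2,1)),((2,2),(3,2)),((3,0),(3,1)),((2,0),(2,1)),((0,0),(1,0)),((1,0),(2,1)),((2,1),(3,1)),((2,1),(3,2))],[((1,1),(2,1)),((2,2),(3,2)),((3,0),(3,1)),((2,0),(2,1)),((0,0),(1,0)),((1,0),(2,1)),((2,1),(3,1)),((2,1),(3,2)),((2,2),(3,3))],[((2,2),(3,2)),((3,0),(3,1)),((2,0),(2,1)),((0,0),(1,0)),((1,0),(2,1)),((2,1),(3,1)),((2,1),(3,2)),((2,2),(3,3)),((1,1),(2,2))],[((3,0),(3,1)),((2,0),(2,1)),((0,0),(1,0)),((1,0),(2,1)),((2,1),(3,1)),((2,1),(3,2)),((2,2),(3,3)),((1,1),(2,2)),((2,1),(2,2))],[((2,0),(2,1)),((0,0),(1,0)),((1,0),(2,1)),((2,1),(3,1)),((2,1),(3,2)),((2,2),(3,3)),((1,1),(2,2)),((2,1),(2,2)),((2,0),(3,0))],[((0,0),(1,0)),((1,0),(2,1)),((2,1),(3,1)),((2,1),(3,2)),((2,2),(3,3)),((1,1),(2,2)),((2,1),(2,2)),((2,0),(3,0)),((1,0),(2,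0))],[((1,0),(2,1)),((2,1),(3,1)),((2,1),(3,2)),((2,2),(3,3)),((1,1),(2,2)),((2,1),(2,2)),((2,0),(3,0)),((1,0),(2,0)),((0,0),(1,1))],[((2,1),(3,1)),((2,1),(3,2)),((2,2),(3,3)),((1,1),(2,2)),((2,1),(2,2)),((2,0),(3,0)),((1,0),(2,0)),((0,0),(1,1)),((1,0),(1,1))],[((2,1),(3,2)),((2,2),(3,3)),((1,1),(2,2)),((2,1),(2,2)),((2,0),(3,0)),((1,0),(2,0)),((0,0),(1,1)),((1,0),(1,1)),((2,0),(3,1))],[((2,2),(3,3)),((1,1),(2,2)),((2,1),(2,2)),((2,0),(3,0)),((1,0),(2,0)),((0,0),(1,1)),((1,0),(1,1)),((2,0),(3,1)),((3,1),(3,2))],[((1,1),(2,2)),((2,1),(2,2)),((2,0),(3,0)),((1,0),(2,0)),((0,0),(1,1)),((1,0),(1,1)),((2,0),(3,1)),((3,1),(3,2)),((3,2),(3,3))],[((2,1),(2,2)),((2,0),(3,0)),((1,0),(2,0)),((0,0),(1,1)),((1,0),(1,1)),((2,0),(3,1)),((3,1),(3,2)),((3,2),(3,3)),((1,1),(2,1))]]"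
lemma w4_0: "set vs4 \<subseteq> set (reach 10 [((2,0),(3,0)),((1,0),(2,0)),((0,0),(1,1)),((1,0),(1,1)),((2,0),(3,1)),((3,1),(3,2)),((3,2),(3,3)),((1,1),(2,1)),((2,2),(3,2))] [(0,0)])" unfolding vs4_def by (simp add: reach_numeral)
lemma w4_1: "set vs4 \<subseteq> set (reach 10 [((1,0),(2,0)),((0,0),(1,1)),((1,0),(1,1)),((2,0),(3,1)),((3,1),(3,2)),((3,2),(3,3)),((1,1),(2,1)),((2,2),(3,2)),((3,0),(3,1))] [(0,0)])" unfolding vs4_def by (simp add: reach_numeral)
lemma w4_2: "set vs4 \<subseteq> set (reach 10 [((0,0),(1,1)),((1,0),(1,1)),((2,0),(3,1)),((3,1),(3,2)),((3,2),(3,3)),((1,1),(2,1)),((2,2),(3,2)),((3,0),(3,1)),((2,0),(2,1))] [(0,0)])" unfolding vs4_def by (simp add: reach_numeral)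
lemma w4_3: "set vs4 \<subseteq> set (reach 10 [((1,0),(1,1)),((2,0),(3,1)),((3,1),(3,2)),((3,2),(3,3)),((1,1),(2,1)),((2,2),(3,2)),((3,0),(3,1)),((2,0),(2,1)),((0,0),(1,0))] [(0,0)])" unfolding vs4_def by (simp add: reach_numeral)
lemma w4_4: "set vs4 \<subseteq> set (reach 10 [((2,0),(3,1)),((3,1),(3,2)),((3,2),(3,3)),((1,1),(2,1)),((2,2),(3,2)),((3,0),(3,1)),((2,0),(2,1)),((0,0),(1,0)),((1,0),(2,1))] [(0,0)])" unfolding vs4_def by (simp add: reach_numeral)
lemma w4_5: "set vs4 \<subseteq> set (reach 10 [((3,1),(3,2)),((3,2),(3,3)),((1,1),(2,1)),((2,2),(3,2)),((3,0),(3,1)),((2,0),(2,1)),((0,0),(1,0)),((1,0),(2,1)),((2,1),(3,1))] [(0,0)])" unfolding vs4_def by (simp add: reach_numeral)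
lemma w4_6: "set vs4 \<subseteq> set (reach 10 [((3,2),(3,3)),((1,1),(2,1)),((2,2),(3,2)),((3,0),(3,1)),((2,0),(2,1)),((0,0),(1,0)),((1,0),(2,1)),((2,1),(3,1)),((2,1),(3,2))] [(0,0)])" unfolding vs4_def by (simp add: reach_numeral)
lemma w4_7: "set vs4 \<subseteq> set (reach 10 [((1,1),(2,1)),((2,2),(3,2)),((3,0),(3,1)),((2,0),(2,1)),((0,0),(1,0)),((1,0),(2,1)),((2,1),(3,1)),((2,1),(3,2)),((2,2),(3,3))] [(0,0)])" unfolding vs4_def by (simp add: reach_numeral)
lemma w4_8: "set vs4 \<subseteq> set (reach 10 [((2,2),(3,2)),((3,0),(3,1)),((2,0),(2,1)),((0,0),(1,0)),((1,0),(2,1)),((2,1),(3,1)),((2,1),(3,2)),((2,2),(3,3)),((1,1),(2,2))] [(0,0)])" unfolding vs4_def by (simp add: reach_numeral)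
lemma w4_9: "set vs4 \<subseteq> set (reach 10 [((3,0),(3,1)),((2,0),(2,1)),((0,0),(1,0)),((1,0),(2,1)),((2,1),(3,1)),((2,1),(3,2)),((2,2),(3,3)),((1,1),(2,2)),((2,1),(2,2))] [(0,0)])" unfolding vs4_def by (simp add: reach_numeral)
lemma w4_10: "set vs4 \<subseteq> set (reach 10 [((2,0),(2,1)),((0,0),(1,0)),((1,0),(2,1)),((2,1),(3,1)),((2,1),(3,2)),((2,2),(3,3)),((1,1),(2,2)),((2,1),(2,2)),((2,0),(3,0))] [(0,0)])" unfolding vs4_def by (simp add: reach_numeral)
lemma w4_11: "set vs4 \<subseteq> set (reach 10 [((0,0),(1,0)),((1,0),(2,1)),((2,1),(3,1)),((2,1),(3,2)),((2,2),(3,3)),((1,1),(2,2)),((2,1),(2,2)),((2,0),(3,0)),((1,0),(2,0))] [(0,0)])" unfolding vs4_def by (simp add: reach_numeral)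
lemma w4_12: "set vs4 \<subseteq> set (reach 10 [((1,0),(2,1)),((2,1),(3,1)),((2,1),(3,2)),((2,2),(3,3)),((1,1),(2,2)),((2,1),(2,2)),((2,0),(3,0)),((1,0),(2,0)),((0,0),(1,1))] [(0,0)])" unfolding vs4_def by (simp add: reach_numeral)
lemma w4_13: "set vs4 \<subseteq> set (reach 10 [((2,1),(3,1)),((2,1),(3,2)),((2,2),(3,3)),((1,1),(2,2)),((2,1),(2,2)),((2,0),(3,0)),((1,0),(2,0)),((0,0),(1,1)),((1,0),(1,1))] [(0,0)])" unfolding vs4_def by (simp add: reach_numeral)
lemma w4_14: "set vs4 \<subseteq> set (reach 10 [((2,1),(3,2)),((2,2),(3,3)),((1,1),(2,2)),((2,1),(2,2)),((2,0),(3,0)),((1,0),(2,0)),((0,0),(1,1)),((1,0),(1,1)),((2,0),(3,1))] [(0,0)])" unfolding vs4_def by (simp add: reach_numeral)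
lemma w4_15: "set vs4 \<subseteq> set (reach 10 [((2,2),(3,3)),((1,1),(2,2)),((2,1),(2,2)),((2,0),(3,0)),((1,0),(2,0)),((0,0),(1,1)),((1,0),(1,1)),((2,0),(3,1)),((3,1),(3,2))] [(0,0)])" unfolding vs4_def by (simp add: reach_numeral)
lemma w4_16: "set vs4 \<subseteq> set (reach 10 [((1,1),(2,2)),((2,1),(2,2)),((2,0),(3,0)),((1,0),(2,0)),((0,0),(1,1)),((1,0),(1,1)),((2,0),(3,1)),((3,1),(3,2)),((3,2),(3,3))] [(0,0)])" unfolding vs4_def by (simp add: reach_numeral)
lemma w4_17: "set vs4 \<subseteq> set (reach 10 [((2,1),(2,2)),((2,0),(3,0)),((1,0),(2,0)),((0,0),(1,1)),((1,0),(1,1)),((2,0),(3,1)),((3,1),(3,2)),((3,2),(3,3)),((1,1),(2,1))] [(0,0)])" unfolding vs4_def by (simp add: reach_numeral)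
lemma T4: "cyclically_orderable (tri_vertices 4) (tri_edges 4)"
proof (rule cbo_from_pairs[of ps4 _ "vs4" _ "(0,0)"])
  show "distinct ps4" unfolding ps4_def by code_simp
  show "\<forall>p\<in>set ps4. lexlt (fst p) (snd p)" unfolding ps4_def lexlt_def by code_simp
  show "mk ` set ps4 = tri_edges 4" unfolding tri_edges_plist
    by (rule arg_cong[where f="image mk"]) (unfold ps4_def, code_simp)
  show "set vs4 = tri_vertices 4" unfolding tri_vertices_vlist vs4_def by code_simp
  show "distinct vs4" unfolding vs4_def by code_simp
  show "length vs4 - 1 \<le> length ps4" unfolding vs4_def ps4_def by code_simp
  show "(0, 0) \<in> tri_vertices 4" by (simp add: tri_vertices_def)
  have eq: "ws4 = map (\<lambda>s. map (\<lambda>t. ps4 ! ((s+t) mod length ps4)) [0..<length vs4 - 1]) [0..<length ps4]"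
    unfolding ws4_def vs4_def ps4_def by code_simp
  have len: "length vs4 = 10" unfolding vs4_def by (simp add: reach_numeral)
  have L: "list_all (\<lambda>w. set vs4 \<subseteq> set (reach 10 w [(0,0)])) ws4"
    unfolding ws4_def list.pred_inject using w4_0 w4_1 w4_2 w4_3 w4_4 w4_5 w4_6 w4_7 w4_8 w4_9 w4_10 w4_11 w4_12 w4_13 w4_14 w4_15 w4_16 w4_17 by (intro conjI TrueI list.pred_inject(1))
  show "list_all (\<lambda>s. set vs4 \<subseteq> set (reach (length vs4) (map (\<lambda>t. ps4 ! ((s+t) mod length ps4)) [0..<length vs4 - 1]) [(0,0)])) [0..<length ps4]"
    using L[unfolded eq] unfolding len list.pred_map comp_def .
qed

lemma T1: "cyclically_orderable (tri_vertices 1) (tri_edges 1)"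
proof (rule cbo_from_pairs[of "[]" _ "[(0,0)]" _ "(0,0)"])
  show "mk ` set [] = tri_edges 1" by (simp add: tri_edges_plist plist_def)
  show "set [(0::nat, 0::nat)] = tri_vertices 1" by (auto simp: tri_vertices_def)
qed (auto simp: tri_vertices_def)

lemma finite_tv: "finite (tri_vertices k)"
  by (rule finite_subset[of _ "{..<k} \<times> {..<k}"]) (auto simp: tri_vertices_def)

lemma tv_Suc: "tri_vertices (Suc k) = tri_vertices k \<union> Pair k ` {..k}"
  unfolding tri_vertices_def by auto

lemma card_tv: "2 * card (tri_vertices k) = k * (k + 1)"
proof (induction k)
  case 0
  have "tri_vertices 0 = {}" by (auto simp: tri_vertices_def)
  then show ?case by simp
next
  case (Suc k)
  have d: "tri_vertices k \<inter> Pair k ` {..k} = {}" by (auto simp: tri_vertices_def)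
  have "card (tri_vertices (Suc k)) = card (tri_vertices k) + card (Pair k ` {..k})"
    unfolding tv_Suc by (rule card_Un_disjoint[OF finite_tv _ d]) simp
  also have "card (Pair k ` {..k}) = k + 1" by (simp add: card_image inj_on_def)
  finally show ?case using Suc.IH by simp
qed

definition hh :: "nat \<times> nat \<Rightarrow> (nat \<times> nat) set" where "hh p = {(fst p + 1, snd p), (fst p + 1, snd p + 1)}"
definition dd1 :: "nat \<times> nat \<Rightarrow> (nat \<times> nat) set" where "dd1 p = {(fst p, snd p), (fst p + 1, snd p)}"
definition dd2 :: "nat \<times> nat \<Rightarrow> (nat \<times> nat) set" where "dd2 p = {(fst p, snd p), (fst p + 1, snd p + 1)}"

lemma te_decomp:
  assumes "k \<ge> 1"
  shows "tri_edges k = hh ` tri_vertices (k-1) \<union> dd1 ` tri_vertices (k-1) \<union> dd2 ` tri_vertices (k-1)"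
proof -
  have 1: "{{(i, j), (i, j + 1)} | i j. j + 1 \<le> i \<and> i + 1 \<le> k} = hh ` tri_vertices (k-1)"
  proof (rule set_eqI, rule iffI)
    fix e assume "e \<in> {{(i, j), (i, j + 1)} | i j. j + 1 \<le> i \<and> i + 1 \<le> k}"
    then obtain i j where e: "e = {(i, j), (i, j + 1)}" "j + 1 \<le> i" "i + 1 \<le> k" by blast
    then have "e = hh (i - 1, j)" "(i - 1, j) \<in> tri_vertices (k-1)" by (auto simp: hh_def tri_vertices_def)
    then show "e \<in> hh ` tri_vertices (k-1)" by blast
  next
    fix e assume "e \<in> hh ` tri_vertices (k-1)"
    then obtain i j where "e = hh (i, j)" "(i, j) \<in> tri_vertices (k-1)" by auto
    then show "e \<in> {{(i, j), (i, j + 1)} | i j. j + 1 \<le> i \<and> i + 1 \<le> k}"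
      proof -
      have "e = {(i+1, j), (i+1, j+1)}" "j+1 \<le> i+1" "i+1+1 \<le> k"
        using \<open>e = hh (i, j)\<close> \<open>(i, j) \<in> tri_vertices (k-1)\<close> assms by (auto simp: hh_def tri_vertices_def)
      then show ?thesis by blast
    qed
  qed
  have 2: "{{(i, j), (i + 1, j)} | i j. j \<le> i \<and> i + 2 \<le> k} = dd1 ` tri_vertices (k-1)"
    using assms by (auto simp: dd1_def tri_vertices_def image_iff) (rule_tac x=a in exI, rule_tac x=b in exI, simp)
  have 3: "{{(i, j), (i + 1, j + 1)} | i j. j \<le> i \<and> i + 2 \<le> k} = dd2 ` tri_vertices (k-1)"
    using assms by (auto simp: dd2_def tri_vertices_def image_iff) (rule_tac x=a in exI, rule_tac x=b in exI, simp)
  show ?thesis unfolding tri_edges_def 1 2 3 ..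
qed

lemma card_te:
  assumes "k \<ge> 1"
  shows "card (tri_edges k) = 3 * card (tri_vertices (k-1))"
proof -
  let ?T = "tri_vertices (k-1)"
  have i1: "inj_on hh ?T" by (auto simp: inj_on_def hh_def doubleton_eq_iff)
  have i2: "inj_on dd1 ?T" by (auto simp: inj_on_def dd1_def doubleton_eq_iff)
  have i3: "inj_on dd2 ?T" by (auto simp: inj_on_def dd2_def doubleton_eq_iff)
  have d12: "hh ` ?T \<inter> dd1 ` ?T = {}" by (auto simp: hh_def dd1_def doubleton_eq_iff)
  have d3: "(hh ` ?T \<union> dd1 ` ?T) \<inter> dd2 ` ?T = {}" by (auto simp: hh_def dd1_def dd2_def doubleton_eq_iff)
  have "card (tri_edges k) = card (hh ` ?T \<union> dd1 ` ?T) + card (dd2 ` ?T)"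
    unfolding te_decomp[OF assms] by (rule card_Un_disjoint[OF _ _ d3]) (simp_all add: finite_tv)
  also have "card (hh ` ?T \<union> dd1 ` ?T) = card (hh ` ?T) + card (dd1 ` ?T)"
    by (rule card_Un_disjoint[OF _ _ d12]) (simp_all add: finite_tv)
  finally show ?thesis using card_image[OF i1] card_image[OF i2] card_image[OF i3] by simp
qed

lemma window_bound:
  fixes m L p1 p2 :: nat
  assumes h: "\<forall>s<m. \<exists>t<L. (s+t) mod m = p1 \<or> (s+t) mod m = p2"
  shows "m \<le> 2 * L"
proof -
  define S where "S p = (\<lambda>t. nat ((int p - int t) mod int m)) ` {..<L}" for p
  have key: "nat ((int ((s+t) mod m) - int t) mod int m) = s" if "s < m" for s t
  proof -
    have "(int ((s+t) mod m) - int t) mod int m = ((int s + int t) mod int m - int t) mod int m"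
      by (simp add: of_nat_mod)
    also have "... = (int s + int t - int t) mod int m" by (simp add: mod_diff_left_eq)
    also have "... = int s" using that by simp
    finally show ?thesis by simp
  qed
  have "{..<m} \<subseteq> S p1 \<union> S p2"
  proof
    fix s assume "s \<in> {..<m}"
    then have s: "s < m" by simp
    then obtain t where t: "t < L" "(s+t) mod m = p1 \<or> (s+t) mod m = p2" using h by auto
    have "s = nat ((int ((s+t) mod m) - int t) mod int m)" using key[OF s] by simp
    then show "s \<in> S p1 \<union> S p2" using t unfolding S_def by auto
  qed
  then have "m \<le> card (S p1 \<union> S p2)"
    using card_mono[of "S p1 \<union> S p2" "{..<m}"] by (simp add: S_def)
  also have "... \<le> card (S p1) + card (S p2)" by (rule card_Un_le)
  also have "... \<le> L + L" unfolding S_def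
    using card_image_le[of "{..<L}"] by (metis add_mono card_lessThan finite_lessThan)
  finally show ?thesis by simp
qed

lemma edge00:
  assumes "{(0::nat, 0::nat), y} \<in> tri_edges k"
  shows "y = (1, 0) \<or> y = (1, 1)"
  using assms unfolding tri_edges_def by (auto simp: doubleton_eq_iff)

lemma not_cbo:
  assumes k: "k \<ge> 5"
  shows "\<not> cyclically_orderable (tri_vertices k) (tri_edges k)"
proof
  assume "cyclically_orderable (tri_vertices k) (tri_edges k)"
  then obtain ord where c: "cyclic_base_ordering (tri_vertices k) (tri_edges k) ord"
    unfolding cyclically_orderable_def by blast
  define V where "V = tri_vertices k"
  define E where "E = tri_edges k"
  define m where "m = card E"
  define L where "L = card V - 1"
  have bij: "bij_betw ord E {1..m}" using c unfolding cyclic_base_ordering_def E_def m_def by blast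
  have win: "\<forall>i\<in>{1..m}. spanning_tree V E ((\<lambda>t. the_inv_into E ord (((i - 1 + t) mod m) + 1)) ` {..< L})"
    using c unfolding cyclic_base_ordering_def E_def m_def V_def L_def by blast
  define e1 where "e1 = {(0::nat, 0::nat), (1, 0)}"
  define e2 where "e2 = {(0::nat, 0::nat), (1, 1)}"
  have "\<forall>s<m. \<exists>t<L. (s+t) mod m = ord e1 - 1 \<or> (s+t) mod m = ord e2 - 1"
  proof (intro allI impI)
    fix s assume s: "s < m"
    define W where "W = (\<lambda>t. the_inv_into E ord (((s + t) mod m) + 1)) ` {..< L}"
    have st: "spanning_tree V E W" using win[rule_format, of "s+1"] s unfolding W_def by simp
    then have WE: "W \<subseteq> E" and cn: "connected_on V W" unfolding spanning_tree_def by auto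
    have v: "(0,0) \<in> V" "(1,0) \<in> V" using k by (auto simp: V_def tri_vertices_def)
    have "((0::nat,0::nat), (1::nat,0::nat)) \<in> {(x, y). {x, y} \<in> W}\<^sup>*" using cn v unfolding connected_on_def by blast
    then obtain y where y: "{(0::nat,0::nat), y} \<in> W"
      by (cases rule: converse_rtranclE) auto
    then have "{(0,0), y} \<in> E" using WE by auto
    then have "y = (1,0) \<or> y = (1,1)" using edge00 unfolding E_def by blast
    then have "e1 \<in> W \<or> e2 \<in> W" using y unfolding e1_def e2_def by auto
    then obtain e where e: "e \<in> W" "e = e1 \<or> e = e2" by blast
    then obtain t where t: "t < L" "e = the_inv_into E ord (((s + t) mod m) + 1)" unfolding W_def by auto
    have "(s + t) mod m < m" using s by simp
    then have "((s + t) mod m) + 1 \<in> ord ` E" using bij unfolding bij_betw_def by auto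
    then have "ord e = ((s + t) mod m) + 1" using t bij f_the_inv_into_f[of ord E] unfolding bij_betw_def by simp
    then show "\<exists>t<L. (s+t) mod m = ord e1 - 1 \<or> (s+t) mod m = ord e2 - 1" using t e by auto
  qed
  then have mL: "m \<le> 2 * L" by (rule window_bound)
  define c where "c = card (tri_vertices (k-1))"
  have c2: "2 * c = (k-1) * k" using card_tv[of "k-1"] k unfolding c_def by simp
  have mc: "m = 3 * c" using card_te[of k] k unfolding m_def E_def c_def by simp
  have v2: "2 * card V = k * (k+1)" using card_tv[of k] unfolding V_def by simp
  have "k * (k+1) = (k-1) * k + 2 * k" using k by (cases k) (auto simp: algebra_simps)
  then have cV: "card V = c + k" using v2 c2 by simp
  have "c \<le> 2 * k - 2" using mL mc cV k unfolding L_def by simp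
  then have "2 * c \<le> 4 * k - 4" by linarith
  moreover have "(k-1) * 4 = 4 * k - 4" by (simp add: diff_mult_distrib)
  ultimately have "(k-1) * k \<le> (k-1) * 4" using c2 by linarith
  then have "k \<le> 4" using k by simp
  then show False using k by simp
qed

theorem mainTheorem2:
  fixes k :: nat
  assumes "k \<ge> 1"
  shows "cyclically_orderable (tri_vertices k) (tri_edges k) \<longleftrightarrow> k \<le> 4"
proof
  assume "cyclically_orderable (tri_vertices k) (tri_edges k)"
  then show "k \<le> 4" using not_cbo[of k] by (cases "k \<le> 4") auto
next
  assume "k \<le> 4"
  then have "k = 1 \<or> k = 2 \<or> k = 3 \<or> k = 4" using assms by auto
  then show "cyclically_orderable (tri_vertices k) (tri_edges k)" using T1 T2 T3 T4 by auto
qed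

end
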